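(* Let $(a(j,n))_{n\in\mathbf N}$, $j=1,\dots,d$, be $d$ unbounded sequences of positive integers, each satisfying a linear recurrence. Then there exist an integer $p\ge1$, real numbers $\lambda(j,l)\ge1$ and integers $d(j,l)\ge0$ for $j=1,\dots,d$ and $l=0,\dots,p$, and a strictly increasing sequence $(n_k)_{k\in\mathbf N}$ of nonnegative integers such that: (i) for every $j$ and every $l=0,\dots,p$, $a(j,pn_k+l)\approx\lambda(j,l)^{n_k}\,n_k^{d(j,l)}$; (ii) for every $j$ there exists $l\in\{0,\dots,p\}$ with $\lambda(j,l)>1$ or $d(j,l)\ge1$; (iii) for every $j$, $\lambda(j,0)=\lambda(j,p)$ and $d(j,0)=d(j,p)$.
   Context: For sequences of positive reals $(\alpha_k)$, $(\beta_k)$, write $\alpha_k\approx\beta_k$ if there is a constant $C>0$ with $\lim_{k\to\infty}\alpha_k/\beta_k=C$. A sequence $(a_n)$ satisfies a linear recurrence if $a_{n+K}=c_1a_{n+K-1}+\dots+c_Ka_n$ for all $n$, for some $K\ge1$ and complex $c_i$. *)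

theory Defs
  imports Complex_Main
begin

definition asymp_approx :: "(nat \<Rightarrow> real) \<Rightarrow> (nat \<Rightarrow> real) \<Rightarrow> bool" where
  "asymp_approx \<alpha> \<beta> \<longleftrightarrow> (\<exists>C>0. (\<lambda>k. \<alpha> k / \<beta> k) \<longlonglongrightarrow> C)"

definition lin_rec :: "(nat \<Rightarrow> complex) \<Rightarrow> bool" where
  "lin_rec a \<longleftrightarrow> (\<exists>K\<ge>1. \<exists>c :: nat \<Rightarrow> complex.
      \<forall>n. a (n + K) = (\<Sum>i=1..K. c i * a (n + K - i)))"

end

theory Submission
  imports Defs "HOL-Computational_Algebra.Fundamental_Theorem_Algebra" "HOL-Analysis.Analysis"
begin

definition EPrep :: "(nat \<Rightarrow> complex) \<Rightarrow> complex set \<Rightarrow> (complex \<Rightarrow> complex poly) \<Rightarrow> nat \<Rightarrow> bool" where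
  "EPrep f V P N \<longleftrightarrow> finite V \<and> 0 \<notin> V \<and> (\<forall>n\<ge>N. f n = (\<Sum>\<nu>\<in>V. poly (P \<nu>) (of_nat n) * \<nu> ^ n))"

definition EP :: "(nat \<Rightarrow> complex) \<Rightarrow> bool" where
  "EP f \<longleftrightarrow> (\<exists>V P N. EPrep f V P N)"

lemma EPrep_extend:
  assumes "EPrep f V P N" "V \<subseteq> W" "finite W" "0 \<notin> W"
  shows "EPrep f W (\<lambda>\<nu>. if \<nu> \<in> V then P \<nu> else 0) N"
proof -
  have "(\<Sum>\<nu>\<in>W. poly (if \<nu> \<in> V then P \<nu> else 0) (of_nat n) * \<nu> ^ n)
        = (\<Sum>\<nu>\<in>V. poly (P \<nu>) (of_nat n) * \<nu> ^ n)" for n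
    using assms by (intro sum.mono_neutral_cong_right) auto
  then show ?thesis using assms unfolding EPrep_def by auto
qed

lemma EP_add:
  assumes "EP f" "EP g" shows "EP (\<lambda>n. f n + g n)"
proof -
  obtain V1 P1 N1 V2 P2 N2 where r1: "EPrep f V1 P1 N1" and r2: "EPrep g V2 P2 N2"
    using assms unfolding EP_def by blast
  let ?W = "V1 \<union> V2"
  have fW: "finite ?W" "0 \<notin> ?W" using r1 r2 by (auto simp: EPrep_def)
  obtain Q1 Q2 where q1: "EPrep f ?W Q1 N1" and q2: "EPrep g ?W Q2 N2"
    using EPrep_extend[OF r1 _ fW] EPrep_extend[OF r2 _ fW] by blast
  have "EPrep (\<lambda>n. f n + g n) ?W (\<lambda>\<nu>. Q1 \<nu> + Q2 \<nu>) (max N1 N2)"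
    using q1 q2 fW unfolding EPrep_def by (auto simp: sum.distrib distrib_right)
  thus ?thesis unfolding EP_def by blast
qed

lemma EP_smult:
  assumes "EP f" shows "EP (\<lambda>n. c * f n)"
proof -
  obtain V P N where r: "EPrep f V P N" using assms unfolding EP_def by blast
  have "EPrep (\<lambda>n. c * f n) V (\<lambda>\<nu>. smult c (P \<nu>)) N"
    using r unfolding EPrep_def by (auto simp: sum_distrib_left mult.assoc)
  thus ?thesis unfolding EP_def by blast
qed

lemma EP_cong:
  assumes "EP f" "\<And>n. n \<ge> M \<Longrightarrow> g n = f n" shows "EP g"
proof -
  obtain V P N where r: "EPrep f V P N" using assms unfolding EP_def by blast
  have "EPrep g V P (max N M)"
    using r assms(2) unfolding EPrep_def by auto
  thus ?thesis unfolding EP_def by blast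
qed

lemma EP_zero:
  assumes "\<And>n. n \<ge> M \<Longrightarrow> g n = 0" shows "EP g"
proof -
  have "EPrep g {} (\<lambda>_. 0) M" using assms unfolding EPrep_def by auto
  thus ?thesis unfolding EP_def by blast
qed

lemma EP_geom:
  assumes "\<mu> \<noteq> 0" shows "EP (\<lambda>n. c * \<mu> ^ n)"
proof -
  have "EPrep (\<lambda>n. c * \<mu> ^ n) {\<mu>} (\<lambda>_. [:c:]) 0" using assms unfolding EPrep_def by auto
  thus ?thesis unfolding EP_def by blast
qed

lemma EP_term:
  assumes "\<nu> \<noteq> 0" shows "EP (\<lambda>n. poly r (of_nat n) * \<nu> ^ n)"
proof -
  have "EPrep (\<lambda>n. poly r (of_nat n) * \<nu> ^ n) {\<nu>} (\<lambda>_. r) 0" using assms unfolding EPrep_def by auto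
  thus ?thesis unfolding EP_def by blast
qed

lemma EP_sum:
  assumes "finite A" "\<And>i. i \<in> A \<Longrightarrow> EP (f i)" shows "EP (\<lambda>n. \<Sum>i\<in>A. f i n)"
  using assms
proof (induction A rule: finite_induct)
  case empty
  then show ?case using EP_zero[of 0] by auto
next
  case (insert x F)
  then show ?case using EP_add[of "f x" "\<lambda>n. \<Sum>i\<in>F. f i n"] by auto
qed

lemma deg_drop:
  fixes p :: "'a::zero poly"
  assumes "degree p \<le> s" "coeff p s = 0" shows "p = 0 \<or> degree p < s"
  using assms by (metis le_neq_implies_less leading_coeff_0_iff)

definition Top :: "complex \<Rightarrow> complex \<Rightarrow> complex poly \<Rightarrow> complex poly" where
  "Top \<nu> \<mu> r = smult \<nu> (r \<circ>\<^sub>p [:1,1:]) - smult \<mu> r"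

lemma poly_Top: "poly (Top \<nu> \<mu> r) x = \<nu> * poly r (x + 1) - \<mu> * poly r x"
  by (simp add: Top_def poly_pcompose add.commute)

lemma Top_add: "Top \<nu> \<mu> (a + b) = Top \<nu> \<mu> a + Top \<nu> \<mu> b"
  by (simp add: Top_def pcompose_add smult_add_right)

lemma monom_comp: "monom (a::complex) s \<circ>\<^sub>p [:1,1:] = smult a ([:1,1:] ^ s)"
  by (rule poly_ext) (simp add: poly_pcompose poly_monom add.commute poly_power)


lemma Top_surj:
  assumes nz: "\<nu> \<noteq> 0" shows "\<exists>r. Top \<nu> \<mu> r = q"
proof -
  have "\<forall>q. (q = 0 \<or> degree q < s) \<longrightarrow> (\<exists>r. Top \<nu> \<mu> r = q)" for s
  proof (induction s)
    case 0 then show ?case by (auto intro: exI[of _ 0] simp: Top_def)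
  next
    case (Suc s)
    show ?case
    proof (intro allI impI)
      fix q :: "complex poly" assume q: "q = 0 \<or> degree q < Suc s"
      show "\<exists>r. Top \<nu> \<mu> r = q"
      proof (cases "q = 0 \<or> degree q < s")
        case True then show ?thesis using Suc.IH by blast
      next
        case False
        then have qnz: "q \<noteq> 0" and dq: "degree q = s" using q by auto
        define c where "c = lead_coeff q"
        have dpow: "degree ([:1,1:] ^ k :: complex poly) \<le> k" for k
          using degree_power_le[of "[:1,1::complex:]" k] by simp
        obtain r0 where dr0: "degree (Top \<nu> \<mu> r0) \<le> s" and cr0: "coeff (Top \<nu> \<mu> r0) s = c"
        proof (cases "\<nu> = \<mu>")
          case True
          define a where "a = c / (\<mu> * of_nat (Suc s))"
          define X where "X = ([:1,1:] ^ Suc s - monom 1 (Suc s) :: complex poly)"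
          have T: "Top \<nu> \<mu> (monom a (Suc s)) = smult (\<mu> * a) X"
            using True by (simp add: Top_def monom_comp X_def smult_diff_right smult_monom)
          have "degree X \<le> Suc s" unfolding X_def
            by (meson degree_diff_le degree_monom_le dpow)
          moreover have "coeff X (Suc s) = 0" unfolding X_def
            using coeff_linear_power[of "1::complex" "Suc s"] by simp
          ultimately have "X = 0 \<or> degree X < Suc s" by (rule deg_drop)
          then have dX: "degree X \<le> s" by auto
          have cX: "coeff X s = of_nat (Suc s)" unfolding X_def
            using coeff_linear_poly_power[of s "Suc s" "1::complex" 1] by simp
          show ?thesis
          proof (rule that[of "monom a (Suc s)"])
            show "degree (Top \<nu> \<mu> (monom a (Suc s))) \<le> s" using T dX
              by (metis degree_smult_le order_trans)
            show "coeff (Top \<nu> \<mu> (monom a (Suc s))) s = c" using T cX True nz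
              by (simp add: a_def del: of_nat_Suc)
          qed
        next
          case False
          define a where "a = c / (\<nu> - \<mu>)"
          have T: "Top \<nu> \<mu> (monom a s) = smult (\<nu> * a) ([:1,1:] ^ s) - smult \<mu> (monom a s)"
            by (simp add: Top_def monom_comp)
          show ?thesis
          proof (rule that[of "monom a s"])
            show "degree (Top \<nu> \<mu> (monom a s)) \<le> s" unfolding T
              by (meson degree_diff_le degree_monom_le dpow degree_smult_le order_trans)
            show "coeff (Top \<nu> \<mu> (monom a s)) s = c"
            proof -
              have "coeff (smult (\<nu> * a) ([:1,1:] ^ s) - smult \<mu> (monom a s)) s = \<nu> * a - \<mu> * a"
                using coeff_linear_power[of "1::complex" s] by simp
              also have "\<dots> = (\<nu> - \<mu>) * a" by (simp add: algebra_simps)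
              also have "\<dots> = c" using False by (simp add: a_def)
              finally show ?thesis using T by simp
            qed
          qed
        qed
        define q' where "q' = q - Top \<nu> \<mu> r0"
        have "degree q' \<le> s" using dr0 dq unfolding q'_def
          by (metis degree_diff_le le_refl)
        moreover have "coeff q' s = 0" using cr0 dq unfolding q'_def c_def by simp
        ultimately have "q' = 0 \<or> degree q' < s" by (rule deg_drop)
        then obtain r1 where "Top \<nu> \<mu> r1 = q'" using Suc.IH by blast
        then have "Top \<nu> \<mu> (r0 + r1) = q" by (simp add: Top_add q'_def)
        thus ?thesis by blast
      qed
    qed
  qed
  then show ?thesis by (meson lessI)
qed


lemma aux_comm: "poly (R::complex poly) (of_nat (Suc n)) * \<nu> ^ Suc n - \<mu> * (poly R (of_nat n) * \<nu> ^ n)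
           = \<nu>^n * (\<nu> * poly R (of_nat (Suc n))) - \<mu> * (poly R (of_nat n) * \<nu> ^ n)"
  by (simp only: power_Suc mult_ac)

lemma EP_step:
  assumes "EP g" "\<And>n. f (Suc n) = \<mu> * f n + g n"
  shows "EP f"
proof -
  obtain V P N where r: "EPrep g V P N" using assms(1) EP_def by blast
  have fin: "finite V" "0 \<notin> V" using r EPrep_def by auto
  have "\<forall>\<nu>\<in>V. \<exists>r. Top \<nu> \<mu> r = P \<nu>" using fin Top_surj by metis
  then obtain R where R: "\<And>\<nu>. \<nu> \<in> V \<Longrightarrow> Top \<nu> \<mu> (R \<nu>) = P \<nu>" by metis
  define h where "h n = (\<Sum>\<nu>\<in>V. poly (R \<nu>) (of_nat n) * \<nu> ^ n)" for n
  have EPh: "EP h" unfolding h_def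
    by (rule EP_sum[OF fin(1)]) (use fin in \<open>auto intro: EP_term\<close>)
  have hstep: "h (Suc n) - \<mu> * h n = g n" if "n \<ge> N" for n
  proof -
    have t: "poly (R \<nu>) (of_nat (Suc n)) * \<nu> ^ Suc n - \<mu> * (poly (R \<nu>) (of_nat n) * \<nu> ^ n)
          = poly (P \<nu>) (of_nat n) * \<nu> ^ n" if "\<nu> \<in> V" for \<nu>
    proof -
      have e0: "poly (P \<nu>) (of_nat n) = \<nu> * poly (R \<nu>) (of_nat n + 1) - \<mu> * poly (R \<nu>) (of_nat n)"
        using R[OF that] poly_Top[of \<nu> \<mu> "R \<nu>" "of_nat n"] by simp
      have "(of_nat (Suc n) :: complex) = of_nat n + 1" by simp
      then have e: "\<nu> * poly (R \<nu>) (of_nat (Suc n)) = poly (P \<nu>) (of_nat n) + \<mu> * poly (R \<nu>) (of_nat n)"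
        using e0 by (simp only:) simp
      have "poly (R \<nu>) (of_nat (Suc n)) * \<nu> ^ Suc n - \<mu> * (poly (R \<nu>) (of_nat n) * \<nu> ^ n)
           = \<nu>^n * (\<nu> * poly (R \<nu>) (of_nat (Suc n))) - \<mu> * (poly (R \<nu>) (of_nat n) * \<nu> ^ n)"
        by (rule aux_comm)
      also have "\<dots> = \<nu>^n * (poly (P \<nu>) (of_nat n) + \<mu> * poly (R \<nu>) (of_nat n)) - \<mu> * (poly (R \<nu>) (of_nat n) * \<nu> ^ n)"
        by (simp only: e)
      also have "\<dots> = poly (P \<nu>) (of_nat n) * \<nu> ^ n" by (simp add: algebra_simps)
      finally show ?thesis .
    qed
    have "h (Suc n) - \<mu> * h n = (\<Sum>\<nu>\<in>V. poly (R \<nu>) (of_nat (Suc n)) * \<nu> ^ Suc n - \<mu> * (poly (R \<nu>) (of_nat n) * \<nu> ^ n))"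
      unfolding h_def by (simp add: sum_distrib_left sum_subtractf)
    also have "\<dots> = (\<Sum>\<nu>\<in>V. poly (P \<nu>) (of_nat n) * \<nu> ^ n)"
      by (rule sum.cong[OF refl]) (rule t)
    also have "\<dots> = g n" using r that unfolding EPrep_def by auto
    finally show ?thesis .
  qed
  define e where "e n = f n - h n" for n
  have estep: "e (Suc n) = \<mu> * e n" if "n \<ge> N" for n
    using hstep[OF that] assms(2)[of n] unfolding e_def by (simp add: algebra_simps)
  have eN: "e (N + k) = \<mu> ^ k * e N" for k
    by (induction k) (auto simp: estep)
  have EPe: "EP e"
  proof (cases "\<mu> = 0")
    case True
    have "e n = 0" if nN: "n \<ge> Suc N" for n
    proof -
      obtain k where k: "n = Suc N + k" using le_Suc_ex[OF nN] by blast
      have "e n = \<mu> ^ Suc k * e N" using eN[of "Suc k"] k by simp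
      then show ?thesis using True by simp
    qed
    then show ?thesis by (rule EP_zero)
  next
    case False
    have *: "e n = (e N / \<mu> ^ N) * \<mu> ^ n" if nN: "n \<ge> N" for n
    proof -
      obtain k where k: "n = N + k" using le_Suc_ex[OF nN] by blast
      have "e n = \<mu> ^ k * e N" using eN[of k] k by simp
      also have "\<dots> = (e N / \<mu> ^ N) * (\<mu> ^ N * \<mu> ^ k)" using False by simp
      also have "\<dots> = (e N / \<mu> ^ N) * \<mu> ^ n" using k by (simp add: power_add)
      finally show ?thesis .
    qed
    have "EP (\<lambda>n. (e N / \<mu> ^ N) * \<mu> ^ n)" by (rule EP_geom[OF False])
    then show ?thesis by (rule EP_cong[where M=N]) (rule *)
  qed
  have "EP (\<lambda>n. e n + h n)" using EP_add[OF EPe EPh] .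
  then show ?thesis unfolding e_def by simp
qed

definition Lop :: "complex poly \<Rightarrow> (nat \<Rightarrow> complex) \<Rightarrow> nat \<Rightarrow> complex" where
  "Lop ch b n = (\<Sum>i\<le>degree ch. coeff ch i * b (n + i))"

lemma Lop_big: "degree ch < M \<Longrightarrow> Lop ch b n = (\<Sum>i<M. coeff ch i * b (n + i))"
  unfolding Lop_def by (intro sum.mono_neutral_cong_left) (auto simp: coeff_eq_0)

lemma Lop_factor: "Lop ([:-\<mu>,1:] * q) b n = Lop q (\<lambda>m. b (Suc m) - \<mu> * b m) n"
proof -
  define M where "M = Suc (degree q)"
  have d1: "degree ([:-\<mu>,1:] * q) < Suc M"
    using degree_mult_le[of "[:-\<mu>,1:]" q] unfolding M_def by simp
  have cf: "coeff ([:-\<mu>,1:] * q) i = (case i of 0 \<Rightarrow> 0 | Suc j \<Rightarrow> coeff q j) - \<mu> * coeff q i" for i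
    by (cases i) (simp_all add: mult_pCons_left coeff_pCons)
  have qM: "coeff q M = 0" unfolding M_def by (simp add: coeff_eq_0)
  have "Lop ([:-\<mu>,1:] * q) b n = (\<Sum>i<Suc M. coeff ([:-\<mu>,1:] * q) i * b (n + i))"
    by (rule Lop_big[OF d1])
  also have "\<dots> = (\<Sum>i<Suc M. (case i of 0 \<Rightarrow> 0 | Suc j \<Rightarrow> coeff q j) * b (n + i)
                     - \<mu> * (coeff q i * b (n + i)))"
    by (rule sum.cong[OF refl]) (simp only: cf left_diff_distrib mult.assoc)
  also have "\<dots> = (\<Sum>i<Suc M. (case i of 0 \<Rightarrow> 0 | Suc j \<Rightarrow> coeff q j) * b (n + i))
                 - \<mu> * (\<Sum>i<Suc M. coeff q i * b (n + i))"
    by (simp only: sum_subtractf sum_distrib_left)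
  also have "(\<Sum>i<Suc M. (case i of 0 \<Rightarrow> 0 | Suc j \<Rightarrow> coeff q j) * b (n + i))
           = (\<Sum>i<M. coeff q i * b (Suc (n + i)))"
    by (subst sum.lessThan_Suc_shift) simp
  also have "(\<Sum>i<Suc M. coeff q i * b (n + i)) = (\<Sum>i<M. coeff q i * b (n + i))"
    using qM by simp
  also have "(\<Sum>i<M. coeff q i * b (Suc (n + i))) - \<mu> * (\<Sum>i<M. coeff q i * b (n + i))
           = (\<Sum>i<M. coeff q i * (b (Suc (n + i)) - \<mu> * b (n + i)))"
    by (simp add: sum_distrib_left sum_subtractf algebra_simps)
  also have "\<dots> = Lop q (\<lambda>m. b (Suc m) - \<mu> * b m) n"
    by (rule Lop_big[symmetric]) (simp add: M_def)
  finally show ?thesis .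
qed

lemma Lop_EP: "ch \<noteq> 0 \<Longrightarrow> (\<forall>n. Lop ch b n = 0) \<Longrightarrow> EP b"
proof (induction "degree ch" arbitrary: ch b rule: less_induct)
  case less
  show ?case
  proof (cases "degree ch = 0")
    case True
    have c0: "coeff ch 0 \<noteq> 0" using True less.prems(1) leading_coeff_0_iff by fastforce
    have "b n = 0" for n
      using less.prems(2) c0 True unfolding Lop_def by auto
    then show ?thesis using EP_zero by blast
  next
    case False
    then have "\<not> constant (poly ch)" by (simp add: constant_degree)
    then obtain z where "poly ch z = 0" using fundamental_theorem_of_algebra by blast
    then obtain q where ch: "ch = [:-z,1:] * q" using poly_eq_0_iff_dvd dvdE by blast
    have qnz: "q \<noteq> 0" using less.prems(1) ch by auto
    have "degree ([:-z,1:] * q) = degree [:-z,1:] + degree q" by (rule degree_mult_eq) (use qnz in auto)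
    then have dg: "degree ch = degree q + 1" using ch by simp
    have "EP (\<lambda>m. b (Suc m) - z * b m)"
      using less.hyps[of q "\<lambda>m. b (Suc m) - z * b m"] dg qnz less.prems(2) Lop_factor ch by auto
    then show ?thesis by (rule EP_step[where \<mu> = z]) simp
  qed
qed

lemma linrec_EP:
  assumes "lin_rec b" shows "EP b"
proof -
  obtain K c where K: "K \<ge> 1" and rc: "\<And>n. b (n + K) = (\<Sum>i=1..K. c i * b (n + K - i))"
    using assms unfolding lin_rec_def by blast
  define ch where "ch = monom 1 K - (\<Sum>i=1..K. monom (c i) (K - i))"
  have cf: "coeff ch j = (if j = K then 1 else 0) - (\<Sum>i=1..K. if K - i = j then c i else 0)" for j
    unfolding ch_def by (simp add: coeff_sum coeff_monom)
  have "(\<Sum>i=1..K. if K - i = K then c i else 0) = 0"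
    using K by (intro sum.neutral) auto
  then have cK: "coeff ch K = 1" using cf[of K] by simp
  have cbig: "coeff ch j = 0" if "j > K" for j
  proof -
    have "(\<Sum>i=1..K. if K - i = j then c i else 0) = 0"
      using that by (intro sum.neutral) auto
    then show ?thesis using cf[of j] that by simp
  qed
  have dg: "degree ch = K"
    using cK cbig by (metis le_antisym degree_le le_degree one_neq_zero)
  have nz: "ch \<noteq> 0" using cK by auto
  have "Lop ch b n = 0" for n
  proof -
    have "Lop ch b n = (\<Sum>j\<le>K. (if j = K then 1 else 0) * b (n + j))
            - (\<Sum>j\<le>K. (\<Sum>i=1..K. if K - i = j then c i else 0) * b (n + j))"
      unfolding Lop_def dg by (simp add: cf left_diff_distrib sum_subtractf del: mult_if_delta)
    also have "(\<Sum>j\<le>K. (if j = K then 1 else 0) * b (n + j)) = (\<Sum>j\<le>K. if j = K then b (n + j) else 0)"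
      by (rule sum.cong) auto
    also have "\<dots> = b (n + K)" by simp
    also have "(\<Sum>j\<le>K. (\<Sum>i=1..K. if K - i = j then c i else 0) * b (n + j))
             = (\<Sum>j\<le>K. \<Sum>i=1..K. if K - i = j then c i * b (n + j) else 0)"
      by (auto simp: sum_distrib_right intro!: sum.cong)
    also have "\<dots> = (\<Sum>i=1..K. \<Sum>j\<le>K. if K - i = j then c i * b (n + j) else 0)"
      by (rule sum.swap)
    also have "\<dots> = (\<Sum>i=1..K. c i * b (n + K - i))"
      by (rule sum.cong[OF refl]) auto
    finally show ?thesis using rc[of n] by simp
  qed
  then show ?thesis using Lop_EP nz by blast
qed


lemma poly_bound:
  fixes q :: "complex poly"
  shows "norm (poly q x) \<le> (\<Sum>i\<le>degree q. norm (coeff q i)) * (norm x + 1) ^ degree q"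
proof -
  have "norm (poly q x) \<le> (\<Sum>i\<le>degree q. norm (coeff q i * x ^ i))"
    unfolding poly_altdef by (rule norm_sum)
  also have "\<dots> \<le> (\<Sum>i\<le>degree q. norm (coeff q i) * (norm x + 1) ^ degree q)"
  proof (rule sum_mono)
    fix i assume "i \<in> {..degree q}"
    then have i: "i \<le> degree q" by simp
    have "norm x ^ i \<le> (norm x + 1) ^ i" by (rule power_mono) auto
    also have "\<dots> \<le> (norm x + 1) ^ degree q" using i by (intro power_increasing) auto
    finally have "norm x ^ i \<le> (norm x + 1) ^ degree q" .
    then show "norm (coeff q i * x ^ i) \<le> norm (coeff q i) * (norm x + 1) ^ degree q"
      by (simp add: norm_mult norm_power mult_left_mono)
  qed
  also have "\<dots> = (\<Sum>i\<le>degree q. norm (coeff q i)) * (norm x + 1) ^ degree q"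
    by (simp add: sum_distrib_right)
  finally show ?thesis .
qed

lemma polygeom_lim:
  fixes s :: real
  assumes "0 \<le> s" "s < 1"
  shows "(\<lambda>n. (real n + 1) ^ e * s ^ n) \<longlonglongrightarrow> 0"
proof (cases "e = 0")
  case True
  then show ?thesis using assms by (simp add: LIMSEQ_power_zero)
next
  case False
  define r where "r = root e s"
  have r0: "0 \<le> r" using assms unfolding r_def by (simp add: real_root_ge_zero)
  have r1: "r < 1" using assms False unfolding r_def by (simp add: real_root_lt_1_iff)
  have rs: "r ^ e = s" using assms False unfolding r_def by (simp add: real_root_pow_pos2)
  have eq: "(real n + 1) ^ e * s ^ n = ((real n + 1) * r ^ n) ^ e" for n
    by (simp add: power_mult_distrib rs[symmetric] power_mult[symmetric] mult.commute)
  have "(\<lambda>n. real n * r ^ n) \<longlonglongrightarrow> 0" using powser_times_n_limit_0[of r] r0 r1 by simp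
  moreover have "(\<lambda>n. r ^ n) \<longlonglongrightarrow> 0" using r0 r1 by (simp add: LIMSEQ_power_zero)
  ultimately have "(\<lambda>n. real n * r ^ n + r ^ n) \<longlonglongrightarrow> 0 + 0" by (rule tendsto_add)
  then have "(\<lambda>n. (real n + 1) * r ^ n) \<longlonglongrightarrow> 0" by (simp add: distrib_right)
  then have "(\<lambda>n. ((real n + 1) * r ^ n) ^ e) \<longlonglongrightarrow> 0 ^ e" by (rule tendsto_power)
  moreover have "(0::real) ^ e = 0" using False by simp
  ultimately have "(\<lambda>n. ((real n + 1) * r ^ n) ^ e) \<longlonglongrightarrow> 0" by (simp only:)
  then show ?thesis by (simp only: eq)
qed

lemma poly_over_pow_lim:
  fixes q :: "complex poly"
  assumes "degree q \<le> D"
  shows "(\<lambda>n. poly q (of_nat n) / of_nat n ^ D) \<longlonglongrightarrow> (if degree q = D then lead_coeff q else 0)"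
proof -
  have ev: "eventually (\<lambda>n. (\<Sum>i\<le>degree q. coeff q i * (inverse (of_nat n)) ^ (D - i)) = poly q (of_nat n) / of_nat n ^ D) sequentially"
  proof (rule eventually_sequentiallyI[of 1])
    fix n :: nat assume n: "n \<ge> 1"
    have "poly q (of_nat n) / of_nat n ^ D = (\<Sum>i\<le>degree q. coeff q i * (of_nat n ^ i / of_nat n ^ D))"
      unfolding poly_altdef by (simp add: sum_divide_distrib)
    also have "\<dots> = (\<Sum>i\<le>degree q. coeff q i * (inverse (of_nat n)) ^ (D - i))"
    proof (rule sum.cong[OF refl])
      fix i assume "i \<in> {..degree q}"
      then have iD: "i \<le> D" using assms by simp
      have "(of_nat n :: complex) ^ D = of_nat n ^ i * of_nat n ^ (D - i)"
        using iD by (simp add: power_add[symmetric])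
      then show "coeff q i * (of_nat n ^ i / of_nat n ^ D) = coeff q i * (inverse (of_nat n)) ^ (D - i)"
        using n by (simp add: power_inverse field_simps)
    qed
    finally show "(\<Sum>i\<le>degree q. coeff q i * (inverse (of_nat n)) ^ (D - i)) = poly q (of_nat n) / of_nat n ^ D" by simp
  qed
  have "(\<lambda>n. \<Sum>i\<le>degree q. coeff q i * (inverse (of_nat n :: complex)) ^ (D - i))
        \<longlonglongrightarrow> (\<Sum>i\<le>degree q. coeff q i * 0 ^ (D - i))"
    by (intro tendsto_intros lim_inverse_n)
  moreover have "(\<Sum>i\<le>degree q. coeff q i * (0::complex) ^ (D - i)) = (if degree q = D then lead_coeff q else 0)"
  proof -
    have "(\<Sum>i\<le>degree q. coeff q i * (0::complex) ^ (D - i)) = (\<Sum>i\<le>degree q. if i = D then coeff q i else 0)"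
      using assms by (intro sum.cong refl) auto
    also have "\<dots> = (if degree q = D then lead_coeff q else 0)"
      using assms by auto
    finally show ?thesis .
  qed
  ultimately show ?thesis using ev by (auto intro: Lim_transform_eventually)
qed


lemma class_asymp:
  fixes B :: "complex set" and Q :: "complex \<Rightarrow> complex poly"
  assumes finB: "finite B" and B0: "0 \<notin> B"
    and S: "S = {\<beta>\<in>B. Q \<beta> \<noteq> 0}" and Sne: "S \<noteq> {}"
    and rho: "\<rho> = Max (norm ` S)"
    and D: "D = Max ((\<lambda>\<beta>. degree (Q \<beta>)) ` {\<beta>\<in>S. norm \<beta> = \<rho>})"
    and Sst: "Sst = {\<beta>\<in>S. norm \<beta> = \<rho> \<and> degree (Q \<beta>) = D}"
  shows "(\<lambda>n. (\<Sum>\<beta>\<in>B. poly (Q \<beta>) (of_nat n) * \<beta> ^ n) / of_real (\<rho> ^ n * real n ^ D)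
            - (\<Sum>\<beta>\<in>Sst. lead_coeff (Q \<beta>) * (\<beta> / of_real \<rho>) ^ n)) \<longlonglongrightarrow> 0"
proof -
  have finS: "finite S" using finB S by simp
  have rho_ge: "norm \<beta> \<le> \<rho>" if "\<beta> \<in> S" for \<beta> using that finS rho by simp
  obtain \<beta>0 where b0: "\<beta>0 \<in> S" using Sne by blast
  have "\<beta>0 \<noteq> 0" using b0 B0 S by auto
  then have rho_pos: "\<rho> > 0" using rho_ge[OF b0] by (meson less_le_trans zero_less_norm_iff)
  have D_ge: "degree (Q \<beta>) \<le> D" if "\<beta> \<in> S" "norm \<beta> = \<rho>" for \<beta>
    using that finS D by (auto intro!: Max_ge)
  have SstB: "Sst \<subseteq> B" using S Sst by auto
  define T where "T n \<beta> = poly (Q \<beta>) (of_nat n) * \<beta> ^ n / of_real (\<rho> ^ n * real n ^ D)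
      - (if \<beta> \<in> Sst then lead_coeff (Q \<beta>) * (\<beta> / of_real \<rho>) ^ n else 0)" for n \<beta>
  have eqT: "(\<Sum>\<beta>\<in>B. poly (Q \<beta>) (of_nat n) * \<beta> ^ n) / of_real (\<rho> ^ n * real n ^ D)
            - (\<Sum>\<beta>\<in>Sst. lead_coeff (Q \<beta>) * (\<beta> / of_real \<rho>) ^ n) = (\<Sum>\<beta>\<in>B. T n \<beta>)" for n
  proof -
    have "(\<Sum>\<beta>\<in>B. if \<beta> \<in> Sst then lead_coeff (Q \<beta>) * (\<beta> / of_real \<rho>) ^ n else 0)
          = (\<Sum>\<beta>\<in>Sst. lead_coeff (Q \<beta>) * (\<beta> / of_real \<rho>) ^ n)"
      using finB SstB by (intro sum.mono_neutral_cong_right) auto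
    then show ?thesis unfolding T_def by (simp add: sum_subtractf sum_divide_distrib)
  qed
  have Tform: "T n \<beta> = (poly (Q \<beta>) (of_nat n) / of_nat n ^ D) * (\<beta> / of_real \<rho>) ^ n
      - (if \<beta> \<in> Sst then lead_coeff (Q \<beta>) * (\<beta> / of_real \<rho>) ^ n else 0)" for n \<beta>
  proof -
    have "of_real (\<rho> ^ n * real n ^ D) = (of_real \<rho> ^ n * of_nat n ^ D :: complex)" by simp
    then show ?thesis unfolding T_def by (simp add: power_divide divide_inverse mult_ac power_mult_distrib power_inverse)
  qed
  have "(\<lambda>n. T n \<beta>) \<longlonglongrightarrow> 0" if bB: "\<beta> \<in> B" for \<beta>
  proof -
    define z where "z = \<beta> / of_real \<rho>"
    define Y where "Y n = poly (Q \<beta>) (of_nat n) / (of_nat n ^ D :: complex)" for n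
    have nz: "norm z = norm \<beta> / \<rho>" unfolding z_def using rho_pos by (simp add: norm_divide)
    show ?thesis
    proof (cases "Q \<beta> = 0")
      case True
      then have "\<beta> \<notin> Sst" using Sst S by auto
      then have "T n \<beta> = 0" for n using True Tform by simp
      then show ?thesis by simp
    next
      case Qnz: False
      then have bS: "\<beta> \<in> S" using S bB by simp
      show ?thesis
      proof (cases "norm \<beta> = \<rho>")
        case nr: True
        have z1: "norm (z ^ n) = 1" for n using nz nr rho_pos by (simp add: norm_power)
        have dle: "degree (Q \<beta>) \<le> D" using D_ge bS nr by simp
        show ?thesis
        proof (cases "degree (Q \<beta>) = D")
          case True
          then have bSt: "\<beta> \<in> Sst" using Sst bS nr by simp
          have "Y \<longlonglongrightarrow> lead_coeff (Q \<beta>)"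
            using poly_over_pow_lim[OF dle] True unfolding Y_def by simp
          then have "(\<lambda>n. Y n - lead_coeff (Q \<beta>)) \<longlonglongrightarrow> 0" by (rule LIM_zero)
          then have lim: "(\<lambda>n. norm (Y n - lead_coeff (Q \<beta>))) \<longlonglongrightarrow> 0" by (rule tendsto_norm_zero)
          have "norm (T n \<beta>) \<le> norm (Y n - lead_coeff (Q \<beta>))" for n
          proof -
            have "T n \<beta> = (Y n - lead_coeff (Q \<beta>)) * z ^ n"
              using Tform[of n \<beta>] bSt unfolding Y_def z_def by (simp add: algebra_simps)
            then show ?thesis using z1 by (simp add: norm_mult)
          qed
          then show ?thesis by (intro Lim_null_comparison[OF _ lim]) auto
        next
          case False
          then have bSt: "\<beta> \<notin> Sst" using Sst by simp
          have "Y \<longlonglongrightarrow> 0"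
            using poly_over_pow_lim[OF dle] False unfolding Y_def by simp
          then have lim: "(\<lambda>n. norm (Y n)) \<longlonglongrightarrow> 0" by (rule tendsto_norm_zero)
          have "norm (T n \<beta>) \<le> norm (Y n)" for n
          proof -
            have "T n \<beta> = Y n * z ^ n"
              using Tform[of n \<beta>] bSt unfolding Y_def z_def by simp
            then show ?thesis using z1 by (simp add: norm_mult)
          qed
          then show ?thesis by (intro Lim_null_comparison[OF _ lim]) auto
        qed
      next
        case False
        then have nlt: "norm \<beta> < \<rho>" using rho_ge[OF bS] by simp
        then have bSt: "\<beta> \<notin> Sst" using Sst by auto
        define s where "s = norm z"
        have s0: "0 \<le> s" and s1: "s < 1" using nz nlt rho_pos unfolding s_def by auto
        define A where "A = (\<Sum>i\<le>degree (Q \<beta>). norm (coeff (Q \<beta>) i))"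
        have A0: "A \<ge> 0" unfolding A_def by (simp add: sum_nonneg)
        have "(\<lambda>n. (real n + 1) ^ degree (Q \<beta>) * s ^ n) \<longlonglongrightarrow> 0" by (rule polygeom_lim[OF s0 s1])
        then have lim: "(\<lambda>n. A * ((real n + 1) ^ degree (Q \<beta>) * s ^ n)) \<longlonglongrightarrow> 0"
          by (simp add: tendsto_mult_right_zero)
        have "norm (T n \<beta>) \<le> A * ((real n + 1) ^ degree (Q \<beta>) * s ^ n)" if n1: "n \<ge> 1" for n
        proof -
          have "T n \<beta> = Y n * z ^ n"
            using Tform[of n \<beta>] bSt unfolding Y_def z_def by simp
          then have "norm (T n \<beta>) = norm (poly (Q \<beta>) (of_nat n)) / real n ^ D * s ^ n"
            unfolding Y_def s_def by (simp add: norm_mult norm_divide norm_power)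
          also have "\<dots> \<le> norm (poly (Q \<beta>) (of_nat n)) * s ^ n"
          proof -
            have "real n ^ D \<ge> 1" using n1 by simp
            then have "norm (poly (Q \<beta>) (of_nat n)) / real n ^ D \<le> norm (poly (Q \<beta>) (of_nat n))"
              by (simp add: divide_le_eq order_trans[OF _ mult_left_mono[of 1]])
            then show ?thesis by (rule mult_right_mono) (use s0 in auto)
          qed
          also have "\<dots> \<le> A * (real n + 1) ^ degree (Q \<beta>) * s ^ n"
            using poly_bound[of "Q \<beta>" "of_nat n"] s0 unfolding A_def by (simp add: mult_right_mono)
          finally show ?thesis by (simp add: mult.assoc)
        qed
        then have "eventually (\<lambda>n. norm (T n \<beta>) \<le> A * ((real n + 1) ^ degree (Q \<beta>) * s ^ n)) sequentially"
          by (rule eventually_sequentiallyI)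
        then show ?thesis by (rule Lim_null_comparison[OF _ lim])
      qed
    qed
  qed
  then have "(\<lambda>n. \<Sum>\<beta>\<in>B. T n \<beta>) \<longlonglongrightarrow> 0" by (rule tendsto_null_sum)
  then show ?thesis unfolding eqT .
qed

lemma class_limit:
  fixes f :: "nat \<Rightarrow> real" and Gs :: "nat \<Rightarrow> complex"
  assumes conv: "(\<lambda>n. of_real (f n) / of_real (\<rho> ^ n * real n ^ D) - Gs n) \<longlonglongrightarrow> 0"
    and nk: "filterlim nk at_top sequentially"
    and G: "(\<lambda>k. Gs (nk k)) \<longlonglongrightarrow> G" and G0: "G \<noteq> 0" and fnn: "\<And>n. f n \<ge> 0" and rho: "\<rho> > 0"
  shows "(\<lambda>k. f (nk k) / (\<rho> ^ nk k * real (nk k) ^ D)) \<longlonglongrightarrow> Re G \<and> Re G > 0"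
proof -
  have "(\<lambda>k. of_real (f (nk k)) / of_real (\<rho> ^ nk k * real (nk k) ^ D) - Gs (nk k)) \<longlonglongrightarrow> 0"
    using filterlim_compose[OF conv nk] by simp
  then have "(\<lambda>k. of_real (f (nk k)) / of_real (\<rho> ^ nk k * real (nk k) ^ D) - Gs (nk k) + Gs (nk k)) \<longlonglongrightarrow> 0 + G"
    using G by (rule tendsto_add)
  then have c: "(\<lambda>k. complex_of_real (f (nk k) / (\<rho> ^ nk k * real (nk k) ^ D))) \<longlonglongrightarrow> G"
    by (simp del: of_real_mult of_real_power)
  have re: "(\<lambda>k. f (nk k) / (\<rho> ^ nk k * real (nk k) ^ D)) \<longlonglongrightarrow> Re G"
    using tendsto_Re[OF c] by simp
  have "(\<lambda>k. 0) \<longlonglongrightarrow> Im G" using tendsto_Im[OF c] by simp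
  then have im: "Im G = 0" using LIMSEQ_unique tendsto_const by blast
  have "\<forall>n\<ge>0. 0 \<le> f (nk n) / (\<rho> ^ nk n * real (nk n) ^ D)"
    using fnn rho by (simp add: divide_nonneg_nonneg)
  then have "0 \<le> Re G" using LIMSEQ_le_const[OF re] by blast
  moreover have "Re G \<noteq> 0" using im G0 complex_eq_iff by auto
  ultimately show ?thesis using re by simp
qed

lemma rho_ge1:
  fixes f :: "nat \<Rightarrow> real"
  assumes lim: "(\<lambda>k. f (nk k) / (\<rho> ^ nk k * real (nk k) ^ D)) \<longlonglongrightarrow> c" and rho: "\<rho> > 0"
    and nk: "filterlim nk at_top sequentially" and f1: "\<And>n. f n \<ge> 1"
  shows "\<rho> \<ge> 1"
proof (rule ccontr)
  assume "\<not> \<rho> \<ge> 1"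
  then have r1: "\<rho> < 1" by simp
  have pg: "(\<lambda>n. (real n + 1) ^ D * \<rho> ^ n) \<longlonglongrightarrow> 0" using polygeom_lim[of \<rho> D] rho r1 by simp
  have "(\<lambda>n. \<rho> ^ n * real n ^ D) \<longlonglongrightarrow> 0"
  proof (rule Lim_null_comparison[OF _ pg])
    show "\<forall>\<^sub>F n in sequentially. norm (\<rho> ^ n * real n ^ D) \<le> (real n + 1) ^ D * \<rho> ^ n"
      using rho by (intro always_eventually allI) (simp add: abs_mult power_mono mult.commute mult_left_mono)
  qed
  then have den: "(\<lambda>k. \<rho> ^ nk k * real (nk k) ^ D) \<longlonglongrightarrow> 0"
    using filterlim_compose[OF _ nk] by blast
  have "(\<lambda>k. f (nk k) / (\<rho> ^ nk k * real (nk k) ^ D) * (\<rho> ^ nk k * real (nk k) ^ D)) \<longlonglongrightarrow> c * 0"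
    by (rule tendsto_mult[OF lim den])
  moreover have "eventually (\<lambda>k. nk k \<ge> 1) sequentially"
    using nk by (simp add: filterlim_at_top)
  then have "eventually (\<lambda>k. f (nk k) / (\<rho> ^ nk k * real (nk k) ^ D) * (\<rho> ^ nk k * real (nk k) ^ D) = f (nk k)) sequentially"
    by eventually_elim (use rho in simp)
  ultimately have "(\<lambda>k. f (nk k)) \<longlonglongrightarrow> 0" by (simp add: tendsto_cong)
  moreover have "\<forall>n\<ge>0. 1 \<le> f (nk n)" using f1 by simp
  ultimately have "1 \<le> (0::real)" using LIMSEQ_le_const by blast
  then show False by simp
qed


lemma vandermonde_zero:
  fixes x C :: "'a \<Rightarrow> complex"
  assumes "finite S" "inj_on x S" "\<forall>n<card S. (\<Sum>\<beta>\<in>S. C \<beta> * x \<beta> ^ n) = 0"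
  shows "\<forall>\<beta>\<in>S. C \<beta> = 0"
  using assms
proof (induction S arbitrary: C rule: finite_induct)
  case empty then show ?case by simp
next
  case (insert b S)
  define C' where "C' \<beta> = C \<beta> * (x \<beta> - x b)" for \<beta>
  have cS: "card (insert b S) = Suc (card S)" using insert.hyps by simp
  have "\<forall>n<card S. (\<Sum>\<beta>\<in>S. C' \<beta> * x \<beta> ^ n) = 0"
  proof (intro allI impI)
    fix n assume n: "n < card S"
    have h1: "(\<Sum>\<beta>\<in>insert b S. C \<beta> * x \<beta> ^ Suc n) = 0" and h0: "(\<Sum>\<beta>\<in>insert b S. C \<beta> * x \<beta> ^ n) = 0"
      using insert.prems(2) n cS by auto
    have "(\<Sum>\<beta>\<in>insert b S. C \<beta> * x \<beta> ^ Suc n) - x b * (\<Sum>\<beta>\<in>insert b S. C \<beta> * x \<beta> ^ n)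
        = (\<Sum>\<beta>\<in>insert b S. C' \<beta> * x \<beta> ^ n)"
      unfolding sum_distrib_left sum_subtractf[symmetric] C'_def
      by (rule sum.cong[OF refl]) (simp add: algebra_simps)
    also have "\<dots> = (\<Sum>\<beta>\<in>S. C' \<beta> * x \<beta> ^ n)"
      using insert.hyps by (simp add: C'_def)
    finally show "(\<Sum>\<beta>\<in>S. C' \<beta> * x \<beta> ^ n) = 0" using h1 h0 by simp
  qed
  then have "\<forall>\<beta>\<in>S. C' \<beta> = 0"
    using insert.IH[of C'] insert.prems(1) by (auto simp: inj_on_insert)
  moreover have "x \<beta> \<noteq> x b" if bS: "\<beta> \<in> S" for \<beta>
  proof
    assume "x \<beta> = x b"
    then have "x b \<in> x ` S" using bS by (metis image_eqI)
    then show False using insert.prems(1) insert.hyps by (auto simp: inj_on_insert)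
  qed
  ultimately have CS: "\<forall>\<beta>\<in>S. C \<beta> = 0" unfolding C'_def by auto
  have "(\<Sum>\<beta>\<in>insert b S. C \<beta> * x \<beta> ^ 0) = 0" using insert.prems(2) cS by auto
  then have "C b = 0" using insert.hyps CS by simp
  then show ?case using CS by simp
qed

lemma choose_p:
  fixes V :: "complex set" assumes finV: "finite V"
  shows "\<exists>p\<ge>1. \<forall>\<nu>\<in>V. \<forall>\<nu>'\<in>V. \<forall>q\<ge>1. (\<nu>^p)^q = (\<nu>'^p)^q \<longrightarrow> \<nu>^p = \<nu>'^p"
proof -
  define R where "R = {pr \<in> V \<times> V. \<exists>q\<ge>1. fst pr ^ q = snd pr ^ q}"
  define ord where "ord pr = (SOME q. q \<ge> 1 \<and> fst pr ^ q = snd pr ^ q)" for pr :: "complex \<times> complex"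
  have ordp: "ord pr \<ge> 1 \<and> fst pr ^ ord pr = snd pr ^ ord pr" if "pr \<in> R" for pr
  proof -
    have "\<exists>q. q \<ge> 1 \<and> fst pr ^ q = snd pr ^ q" using that R_def by auto
    then show ?thesis unfolding ord_def by (rule someI_ex)
  qed
  have finR: "finite R" using finV unfolding R_def by simp
  define p where "p = (\<Prod>pr\<in>R. ord pr)"
  have p1: "p \<ge> 1" unfolding p_def using ordp by (intro prod_ge_1) auto
  have "\<nu>^p = \<nu>'^p" if v: "\<nu> \<in> V" "\<nu>' \<in> V" and q: "q \<ge> 1" and e: "(\<nu>^p)^q = (\<nu>'^p)^q" for \<nu> \<nu>' q
  proof -
    have "\<nu> ^ (p*q) = \<nu>' ^ (p*q)" using e by (simp add: power_mult)
    moreover have "p * q \<ge> 1" using p1 q by simp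
    ultimately have "\<exists>q\<ge>1. fst (\<nu>, \<nu>') ^ q = snd (\<nu>, \<nu>') ^ q" by (intro exI[of _ "p*q"]) simp
    then have inR: "(\<nu>, \<nu>') \<in> R" unfolding R_def using v by simp
    then have "ord (\<nu>, \<nu>') dvd p" unfolding p_def using finR by (rule dvd_prodI[rotated])
    then obtain k where k: "p = ord (\<nu>, \<nu>') * k" by (rule dvdE)
    have "\<nu> ^ ord (\<nu>, \<nu>') = \<nu>' ^ ord (\<nu>, \<nu>')" using ordp[OF inR] by simp
    then show ?thesis using k by (simp add: power_mult)
  qed
  then show ?thesis using p1 by blast
qed

lemma subseq_conv:
  fixes U :: "complex set" assumes "finite U" "\<forall>u\<in>U. norm u = 1"
  shows "\<exists>\<sigma>. strict_mono \<sigma> \<and> (\<forall>u\<in>U. convergent (\<lambda>k. u ^ \<sigma> k))"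
  using assms
proof (induction U rule: finite_induct)
  case empty
  then show ?case using strict_mono_id by blast
next
  case (insert u0 U)
  obtain \<sigma> where s: "strict_mono \<sigma>" and c: "\<forall>u\<in>U. convergent (\<lambda>k. u ^ \<sigma> k)"
    using insert by auto
  have "bounded (range (\<lambda>k. u0 ^ \<sigma> k))"
    using insert.prems by (auto simp: bounded_iff norm_power intro!: exI[of _ 1])
  then obtain l r where r: "strict_mono r" and lim: "((\<lambda>k. u0 ^ \<sigma> k) \<circ> r) \<longlonglongrightarrow> l"
    using bounded_imp_convergent_subsequence by blast
  have "strict_mono (\<sigma> \<circ> r)" using s r by (simp add: strict_mono_o)
  moreover have "\<forall>u\<in>insert u0 U. convergent (\<lambda>k. u ^ (\<sigma> \<circ> r) k)"
  proof
    fix u assume "u \<in> insert u0 U"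
    then show "convergent (\<lambda>k. u ^ (\<sigma> \<circ> r) k)"
    proof
      assume "u = u0" then show ?thesis using lim by (auto simp: convergent_def o_def)
    next
      assume "u \<in> U"
      then have "convergent ((\<lambda>k. u ^ \<sigma> k) \<circ> r)" using c r by (intro convergent_subseq_convergent) auto
      then show ?thesis by (simp add: o_def)
    qed
  qed
  ultimately show ?case by blast
qed

lemma strict_mono_add:
  fixes \<sigma> :: "nat \<Rightarrow> nat" assumes "strict_mono \<sigma>" shows "\<sigma> (k + d) \<ge> \<sigma> k + d"
proof (induction d)
  case 0 then show ?case by simp
next
  case (Suc d)
  have "\<sigma> (k + d) < \<sigma> (k + Suc d)" using assms by (simp add: strict_mono_def)
  then show ?case using Suc by simp
qed

lemma approx_q:
  fixes U :: "complex set"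
  assumes finU: "finite U" and un: "\<forall>u\<in>U. norm u = 1" and ep: "\<epsilon> > 0"
  shows "\<exists>q>L. \<forall>u\<in>U. norm (u ^ q - 1) < \<epsilon>"
proof -
  obtain \<sigma> where s: "strict_mono \<sigma>" and c: "\<forall>u\<in>U. convergent (\<lambda>k. u ^ \<sigma> k)"
    using subseq_conv[OF finU un] by blast
  have "\<forall>u\<in>U. eventually (\<lambda>k. dist (u ^ \<sigma> k) (lim (\<lambda>k. u ^ \<sigma> k)) < \<epsilon> / 2) sequentially"
  proof
    fix u assume "u \<in> U"
    then have "(\<lambda>k. u ^ \<sigma> k) \<longlonglongrightarrow> lim (\<lambda>k. u ^ \<sigma> k)" using c by (simp add: convergent_LIMSEQ_iff)
    then show "eventually (\<lambda>k. dist (u ^ \<sigma> k) (lim (\<lambda>k. u ^ \<sigma> k)) < \<epsilon> / 2) sequentially"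
    proof -
      have "\<forall>e>0. eventually (\<lambda>k. dist (u ^ \<sigma> k) (lim (\<lambda>k. u ^ \<sigma> k)) < e) sequentially"
        using \<open>(\<lambda>k. u ^ \<sigma> k) \<longlonglongrightarrow> lim (\<lambda>k. u ^ \<sigma> k)\<close> by (simp only: tendsto_iff)
      moreover have "\<epsilon> / 2 > 0" using ep by simp
      ultimately show ?thesis by blast
    qed
  qed
  then have "eventually (\<lambda>k. \<forall>u\<in>U. dist (u ^ \<sigma> k) (lim (\<lambda>k. u ^ \<sigma> k)) < \<epsilon> / 2) sequentially"
    using finU by (simp add: eventually_ball_finite)
  then obtain K where K: "\<And>k. k \<ge> K \<Longrightarrow> \<forall>u\<in>U. dist (u ^ \<sigma> k) (lim (\<lambda>k. u ^ \<sigma> k)) < \<epsilon> / 2"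
    unfolding eventually_sequentially by blast
  define k2 where "k2 = K + Suc L"
  have big: "\<sigma> k2 \<ge> \<sigma> K + Suc L" unfolding k2_def by (rule strict_mono_add[OF s])
  define q where "q = \<sigma> k2 - \<sigma> K"
  have qL: "q > L" using big unfolding q_def by simp
  have "norm (u ^ q - 1) < \<epsilon>" if u: "u \<in> U" for u
  proof -
    have e2: "\<sigma> k2 = q + \<sigma> K" using big unfolding q_def by simp
    have "u ^ \<sigma> k2 - u ^ \<sigma> K = (u ^ q - 1) * u ^ \<sigma> K" unfolding e2 by (simp add: power_add algebra_simps)
    then have "norm (u ^ q - 1) = norm (u ^ \<sigma> k2 - u ^ \<sigma> K)"
      using un u by (simp add: norm_mult norm_power)
    also have "\<dots> \<le> dist (u ^ \<sigma> k2) (lim (\<lambda>k. u ^ \<sigma> k)) + dist (u ^ \<sigma> K) (lim (\<lambda>k. u ^ \<sigma> k))"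
      by (metis dist_norm dist_triangle2)
    also have "\<dots> < \<epsilon> / 2 + \<epsilon> / 2"
      using K[of k2] K[of K] u unfolding k2_def by (intro add_strict_mono) auto
    finally show ?thesis by simp
  qed
  then show ?thesis using qL by blast
qed

lemma dep_seq:
  assumes "\<And>k L. \<exists>q>L. P k q"
  shows "\<exists>r::nat\<Rightarrow>nat. strict_mono r \<and> (\<forall>k. P k (r k))"
proof -
  define g where "g k L = (SOME q. q > L \<and> P k q)" for k L
  have g: "g k L > L \<and> P k (g k L)" for k L
    unfolding g_def using assms[of L k] by (rule someI_ex)
  define r where "r = rec_nat (g 0 0) (\<lambda>k rk. g (Suc k) rk)"
  have r0: "r 0 = g 0 0" and rS: "r (Suc k) = g (Suc k) (r k)" for k unfolding r_def by simp_all
  have "strict_mono r" unfolding strict_mono_Suc_iff using g rS by simp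
  moreover have "P k (r k)" for k by (cases k) (simp_all add: r0 rS g)
  ultimately show ?thesis by blast
qed

lemma approx_seq:
  fixes U :: "complex set"
  assumes finU: "finite U" and un: "\<forall>u\<in>U. norm u = 1"
  shows "\<exists>qs. strict_mono qs \<and> (\<forall>u\<in>U. (\<lambda>k. u ^ qs k) \<longlonglongrightarrow> 1)"
proof -
  have "\<exists>q>L. \<forall>u\<in>U. norm (u ^ q - 1) < inverse (real (Suc k))" for k L
    by (rule approx_q[OF finU un]) simp
  then obtain qs where qs: "strict_mono qs" and b: "\<And>k. \<forall>u\<in>U. norm (u ^ qs k - 1) < inverse (real (Suc k))"
    using dep_seq[where P = "\<lambda>k q. \<forall>u\<in>U. norm (u ^ q - 1) < inverse (real (Suc k))"] by blast
  have "(\<lambda>k. u ^ qs k) \<longlonglongrightarrow> 1" if u: "u \<in> U" for u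
  proof -
    have "(\<lambda>k. u ^ qs k - 1) \<longlonglongrightarrow> 0"
      by (rule Lim_null_comparison[OF _ LIMSEQ_inverse_real_of_nat])
         (use b u in \<open>auto intro!: always_eventually less_imp_le\<close>)
    then have "(\<lambda>k. u ^ qs k - 1 + 1) \<longlonglongrightarrow> 0 + 1" by (intro tendsto_add tendsto_const)
    then show ?thesis by simp
  qed
  then show ?thesis using qs by blast
qed


lemma common_m:
  fixes u :: "'b \<Rightarrow> complex" and Sf :: "'i \<Rightarrow> 'b set" and C :: "'i \<Rightarrow> 'b \<Rightarrow> complex"
  assumes finW: "finite W" and un: "\<forall>w\<in>W. norm (u w) = 1" and finI: "finite I"
    and SW: "\<forall>i\<in>I. Sf i \<subseteq> W \<and> Sf i \<noteq> {}" and Cnz: "\<forall>i\<in>I. \<forall>w\<in>Sf i. C i w \<noteq> 0"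
    and inj: "\<forall>i\<in>I. \<forall>q\<ge>1. inj_on (\<lambda>w. u w ^ q) (Sf i)"
  shows "\<exists>m. \<forall>i\<in>I. (\<Sum>w\<in>Sf i. C i w * u w ^ m) \<noteq> 0"
  using finI SW Cnz inj
proof (induction I rule: finite_induct)
  case empty then show ?case by simp
next
  case (insert i0 I)
  define G where "G i m = (\<Sum>w\<in>Sf i. C i w * u w ^ m)" for i m
  have "\<exists>m. \<forall>i\<in>I. G i m \<noteq> 0" using insert.IH insert.prems unfolding G_def by auto
  then obtain m where m: "\<forall>i\<in>I. G i m \<noteq> 0" by blast
  have finS: "finite (Sf i)" if "i \<in> insert i0 I" for i
    using insert.prems(1) finW that by (meson finite_subset)
  define N where "N = card (Sf i0)"
  have N1: "N \<ge> 1" using finS[of i0] insert.prems(1) unfolding N_def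
    by (simp add: Suc_le_eq card_gt_0_iff)
  define \<delta> where "\<delta> = Min (insert 1 ((\<lambda>i. norm (G i m)) ` I))"
  have dpos: "\<delta> > 0" unfolding \<delta>_def using insert.hyps(1) m by (subst Min_gr_iff) auto
  have dle: "\<delta> \<le> norm (G i m)" if "i \<in> I" for i
    unfolding \<delta>_def using insert.hyps(1) that by (intro Min_le) auto
  define K where "K = 1 + (\<Sum>i\<in>I. \<Sum>w\<in>Sf i. norm (C i w))"
  have K1: "K \<ge> 1" unfolding K_def by (simp add: sum_nonneg)
  have MK: "(\<Sum>w\<in>Sf i. norm (C i w)) \<le> K" if "i \<in> I" for i
  proof -
    have "(\<Sum>w\<in>Sf i. norm (C i w)) \<le> (\<Sum>i\<in>I. \<Sum>w\<in>Sf i. norm (C i w))"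
      using insert.hyps(1) that by (intro member_le_sum) (auto simp: sum_nonneg)
    then show ?thesis unfolding K_def by simp
  qed
  define \<epsilon> where "\<epsilon> = \<delta> / (2 * real N * K)"
  have epos: "\<epsilon> > 0" unfolding \<epsilon>_def using dpos N1 K1 by simp
  obtain q where q0: "q > 0" and q: "\<forall>v\<in>u ` W. norm (v ^ q - 1) < \<epsilon>"
    using approx_q[of "u ` W" \<epsilon> 0] finW un epos by auto
  have diffb: "norm (G i (m + n * q) - G i m) \<le> \<delta> / 2" if iI: "i \<in> I" and nN: "n < N" for i n
  proof -
    have "G i (m + n * q) - G i m = (\<Sum>w\<in>Sf i. C i w * u w ^ m * ((u w ^ q) ^ n - 1))"
      unfolding G_def sum_subtractf[symmetric]
      by (rule sum.cong[OF refl]) (simp add: power_add algebra_simps flip: power_mult)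
    also have "norm \<dots> \<le> (\<Sum>w\<in>Sf i. norm (C i w * u w ^ m * ((u w ^ q) ^ n - 1)))" by (rule norm_sum)
    also have "\<dots> \<le> (\<Sum>w\<in>Sf i. norm (C i w) * (real N * \<epsilon>))"
    proof (rule sum_mono)
      fix w assume w: "w \<in> Sf i"
      then have wW: "w \<in> W" using insert.prems(1) iI by auto
      have "norm ((u w ^ q) ^ n - 1 ^ n) \<le> real n * norm (u w ^ q - 1)"
        by (rule norm_power_diff) (use un wW in \<open>auto simp: norm_power\<close>)
      also have "\<dots> \<le> real N * \<epsilon>"
        using q wW nN by (intro mult_mono) auto
      finally have "norm ((u w ^ q) ^ n - 1) \<le> real N * \<epsilon>" by simp
      then show "norm (C i w * u w ^ m * ((u w ^ q) ^ n - 1)) \<le> norm (C i w) * (real N * \<epsilon>)"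
        using un wW by (simp add: norm_mult norm_power mult_left_mono)
    qed
    also have "\<dots> = (\<Sum>w\<in>Sf i. norm (C i w)) * (real N * \<epsilon>)" by (simp add: sum_distrib_right)
    also have "\<dots> \<le> K * (real N * \<epsilon>)"
      using MK[OF iI] epos by (intro mult_right_mono) auto
    also have "\<dots> = \<delta> / 2" unfolding \<epsilon>_def using K1 N1 by (simp add: field_simps)
    finally show ?thesis .
  qed
  have old: "G i (m + n * q) \<noteq> 0" if iI: "i \<in> I" and nN: "n < N" for i n
  proof
    assume "G i (m + n * q) = 0"
    then have "norm (G i m) \<le> \<delta> / 2" using diffb[OF iI nN] by (simp add: norm_minus_commute)
    then show False using dle[OF iI] dpos by simp
  qed
  have "\<exists>n<N. G i0 (m + n * q) \<noteq> 0"
  proof (rule ccontr)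
    assume "\<not> (\<exists>n<N. G i0 (m + n * q) \<noteq> 0)"
    then have vz: "\<forall>n<card (Sf i0). (\<Sum>w\<in>Sf i0. (C i0 w * u w ^ m) * (u w ^ q) ^ n) = 0"
    proof (intro allI impI)
      fix n assume nc: "n < card (Sf i0)"
      have "G i0 (m + n * q) = 0" using \<open>\<not> (\<exists>n<N. G i0 (m + n * q) \<noteq> 0)\<close> nc N_def by auto
      moreover have "G i0 (m + n * q) = (\<Sum>w\<in>Sf i0. (C i0 w * u w ^ m) * (u w ^ q) ^ n)"
      proof -
        have "u w ^ (m + n * q) = u w ^ m * (u w ^ q) ^ n" for w
          by (simp add: power_add mult.commute[of n q] power_mult)
        then show ?thesis unfolding G_def by (simp add: mult.assoc)
      qed
      ultimately show "(\<Sum>w\<in>Sf i0. (C i0 w * u w ^ m) * (u w ^ q) ^ n) = 0" by simp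
    qed
    have injq: "inj_on (\<lambda>w. u w ^ q) (Sf i0)" using insert.prems(3) q0 by simp
    have z: "\<forall>w\<in>Sf i0. C i0 w * u w ^ m = 0"
    proof -
      have fS0: "finite (Sf i0)" by (rule finS) simp
      show ?thesis
        using vandermonde_zero[OF fS0, where x="\<lambda>w. u w ^ q" and C="\<lambda>w. C i0 w * u w ^ m"] vz injq
        by blast
    qed
    obtain w where w: "w \<in> Sf i0" using insert.prems(1) by auto
    then have "u w \<noteq> 0" using un insert.prems(1) by force
    then show False using z w insert.prems(2) by simp
  qed
  then obtain n where "n < N" "G i0 (m + n * q) \<noteq> 0" by blast
  then have "\<forall>i\<in>insert i0 I. G i (m + n * q) \<noteq> 0" using old by auto
  then show ?case unfolding G_def by blast
qed


lemma choice3: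
  assumes "\<forall>j\<in>A. \<exists>x y z. R j x y z"
  shows "\<exists>f g h. \<forall>j\<in>A. R j (f j) (g j) (h j)"
proof -
  from assms have "\<forall>j\<in>A. \<exists>t. R j (fst t) (fst (snd t)) (snd (snd t))" by auto
  from bchoice[OF this] obtain F where "\<forall>j\<in>A. R j (fst (F j)) (fst (snd (F j))) (snd (snd (F j)))"
    by blast
  then show ?thesis
    by (intro exI[of _ "\<lambda>j. fst (F j)"] exI[of _ "\<lambda>j. fst (snd (F j))"] exI[of _ "\<lambda>j. snd (snd (F j))"])
qed

lemma classrep_lemma:
  fixes P :: "complex \<Rightarrow> complex poly" and V :: "complex set"
  assumes finV: "finite V"
  shows "(\<Sum>\<nu>\<in>V. poly (P \<nu>) (of_nat (p*n+l)) * \<nu> ^ (p*n+l))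
       = (\<Sum>\<beta>\<in>(\<lambda>\<nu>. \<nu>^p) ` V. poly (\<Sum>\<nu>\<in>{\<nu>\<in>V. \<nu>^p = \<beta>}. smult (\<nu>^l) (P \<nu> \<circ>\<^sub>p [:of_nat l, of_nat p:])) (of_nat n) * \<beta> ^ n)"
proof -
  have "(\<Sum>\<nu>\<in>V. poly (P \<nu>) (of_nat (p*n+l)) * \<nu> ^ (p*n+l))
      = (\<Sum>\<nu>\<in>V. poly (smult (\<nu>^l) (P \<nu> \<circ>\<^sub>p [:of_nat l, of_nat p:])) (of_nat n) * (\<nu>^p)^n)"
  proof (rule sum.cong[OF refl])
    fix \<nu> :: complex
    have "(of_nat (p*n+l) :: complex) = of_nat l + of_nat n * of_nat p" by (simp add: algebra_simps)
    moreover have "\<nu> ^ (p*n+l) = \<nu>^l * (\<nu>^p)^n"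
    proof -
      have "\<nu> ^ (p*n+l) = \<nu> ^ (p*n) * \<nu>^l" by (rule power_add)
      also have "\<nu> ^ (p*n) = (\<nu>^p)^n" by (rule power_mult)
      finally show ?thesis by (simp only: mult.commute)
    qed
    ultimately show "poly (P \<nu>) (of_nat (p*n+l)) * \<nu> ^ (p*n+l)
        = poly (smult (\<nu>^l) (P \<nu> \<circ>\<^sub>p [:of_nat l, of_nat p:])) (of_nat n) * (\<nu>^p)^n"
      by (simp add: poly_pcompose algebra_simps)
  qed
  also have "\<dots> = (\<Sum>\<beta>\<in>(\<lambda>\<nu>. \<nu>^p) ` V. \<Sum>\<nu>\<in>{\<nu>\<in>V. \<nu>^p = \<beta>}.
        poly (smult (\<nu>^l) (P \<nu> \<circ>\<^sub>p [:of_nat l, of_nat p:])) (of_nat n) * (\<nu>^p)^n)"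
    by (rule sum.image_gen[OF finV])
  also have "\<dots> = (\<Sum>\<beta>\<in>(\<lambda>\<nu>. \<nu>^p) ` V. poly (\<Sum>\<nu>\<in>{\<nu>\<in>V. \<nu>^p = \<beta>}. smult (\<nu>^l) (P \<nu> \<circ>\<^sub>p [:of_nat l, of_nat p:])) (of_nat n) * \<beta> ^ n)"
  proof (rule sum.cong[OF refl])
    fix \<beta>
    have "(\<Sum>\<nu>\<in>{\<nu>\<in>V. \<nu>^p = \<beta>}. poly (smult (\<nu>^l) (P \<nu> \<circ>\<^sub>p [:of_nat l, of_nat p:])) (of_nat n) * (\<nu>^p)^n)
        = (\<Sum>\<nu>\<in>{\<nu>\<in>V. \<nu>^p = \<beta>}. poly (smult (\<nu>^l) (P \<nu> \<circ>\<^sub>p [:of_nat l, of_nat p:])) (of_nat n) * \<beta>^n)"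
      by (rule sum.cong) auto
    then show "(\<Sum>\<nu>\<in>{\<nu>\<in>V. \<nu>^p = \<beta>}. poly (smult (\<nu>^l) (P \<nu> \<circ>\<^sub>p [:of_nat l, of_nat p:])) (of_nat n) * (\<nu>^p)^n)
        = poly (\<Sum>\<nu>\<in>{\<nu>\<in>V. \<nu>^p = \<beta>}. smult (\<nu>^l) (P \<nu> \<circ>\<^sub>p [:of_nat l, of_nat p:])) (of_nat n) * \<beta> ^ n"
      by (simp add: poly_sum sum_distrib_right)
  qed
  finally show ?thesis .
qed

lemma smult_sum_right: "smult c (sum f A) = sum (\<lambda>i. smult c (f i)) A"
  by (induction A rule: infinite_finite_induct) (simp_all add: smult_add_right)

lemma Qp_Q0:
  fixes P :: "complex \<Rightarrow> complex poly" and V :: "complex set"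
  shows "(\<Sum>\<nu>\<in>{\<nu>\<in>V. \<nu>^p = \<beta>}. smult (\<nu>^p) (P \<nu> \<circ>\<^sub>p [:of_nat p, of_nat p:]))
       = smult \<beta> ((\<Sum>\<nu>\<in>{\<nu>\<in>V. \<nu>^p = \<beta>}. smult (\<nu>^0) (P \<nu> \<circ>\<^sub>p [:of_nat 0, of_nat p:])) \<circ>\<^sub>p [:1,1:])"
proof -
  have c: "[:0, of_nat p:] \<circ>\<^sub>p [:1,1:] = ([:of_nat p, of_nat p:] :: complex poly)"
    by (simp add: pcompose_pCons)
  have "(\<Sum>\<nu>\<in>{\<nu>\<in>V. \<nu>^p = \<beta>}. smult (\<nu>^p) (P \<nu> \<circ>\<^sub>p [:of_nat p, of_nat p:]))
      = (\<Sum>\<nu>\<in>{\<nu>\<in>V. \<nu>^p = \<beta>}. smult \<beta> (P \<nu> \<circ>\<^sub>p [:of_nat p, of_nat p:]))"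
    by (rule sum.cong) auto
  also have "\<dots> = smult \<beta> (\<Sum>\<nu>\<in>{\<nu>\<in>V. \<nu>^p = \<beta>}. P \<nu> \<circ>\<^sub>p [:of_nat p, of_nat p:])"
    by (simp add: smult_sum_right)
  also have "(\<Sum>\<nu>\<in>{\<nu>\<in>V. \<nu>^p = \<beta>}. P \<nu> \<circ>\<^sub>p [:of_nat p, of_nat p:])
      = (\<Sum>\<nu>\<in>{\<nu>\<in>V. \<nu>^p = \<beta>}. smult (\<nu>^0) (P \<nu> \<circ>\<^sub>p [:of_nat 0, of_nat p:])) \<circ>\<^sub>p [:1,1:]"
    by (simp add: pcompose_sum pcompose_assoc[symmetric] c)
  finally show ?thesis .
qed


theorem lemma1:
  fixes d :: nat and a :: "nat \<Rightarrow> nat \<Rightarrow> nat"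
  assumes pos: "\<And>j n. j \<in> {1..d} \<Longrightarrow> a j n > 0"
    and unbdd: "\<And>j. j \<in> {1..d} \<Longrightarrow> \<not> bdd_above (range (a j))"
    and rec: "\<And>j. j \<in> {1..d} \<Longrightarrow> lin_rec (\<lambda>n. of_nat (a j n))"
  shows "\<exists>(p::nat) (lam::nat \<Rightarrow> nat \<Rightarrow> real) (e::nat \<Rightarrow> nat \<Rightarrow> nat) (nk::nat \<Rightarrow> nat).
           p \<ge> 1 \<and> strict_mono nk \<and>
           (\<forall>j\<in>{1..d}. \<forall>l\<in>{0..p}. lam j l \<ge> 1) \<and>
           (\<forall>j\<in>{1..d}. \<forall>l\<in>{0..p}.
              asymp_approx (\<lambda>k. real (a j (p * nk k + l)))
                           (\<lambda>k. lam j l ^ nk k * real (nk k) ^ e j l)) \<and>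
           (\<forall>j\<in>{1..d}. \<exists>l\<in>{0..p}. lam j l > 1 \<or> e j l \<ge> 1) \<and>
           (\<forall>j\<in>{1..d}. lam j 0 = lam j p \<and> e j 0 = e j p)"
proof -
  have "\<forall>j\<in>{1..d}. \<exists>V P N. EPrep (\<lambda>n. of_nat (a j n)) V P N"
    using rec linrec_EP unfolding EP_def by blast
  then obtain V0 P0 N0 where rep0: "\<And>j. j \<in> {1..d} \<Longrightarrow> EPrep (\<lambda>n. of_nat (a j n)) (V0 j) (P0 j) (N0 j)"
    using choice3[of "{1..d}" "\<lambda>j V P N. EPrep (\<lambda>n. of_nat (a j n)) V P N"] by blast
  define V where "V = (\<Union>j\<in>{1..d}. V0 j)"
  have finV: "finite V" and V0: "0 \<notin> V" using rep0 unfolding V_def EPrep_def by auto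
  define P where "P j \<nu> = (if \<nu> \<in> V0 j then P0 j \<nu> else 0)" for j \<nu>
  define N where "N = (\<Sum>j\<in>{1..d}. N0 j)"
  have rep: "of_nat (a j n) = (\<Sum>\<nu>\<in>V. poly (P j \<nu>) (of_nat n) * \<nu> ^ n)" if jd: "j \<in> {1..d}" and nN: "n \<ge> N" for j n
  proof -
    have "V0 j \<subseteq> V" unfolding V_def using jd by auto
    then have "EPrep (\<lambda>n. of_nat (a j n)) V (P j) (N0 j)"
      using EPrep_extend[OF rep0[OF jd], of V] finV V0 unfolding P_def by auto
    moreover have "N0 j \<le> N" unfolding N_def using jd by (intro member_le_sum) auto
    ultimately show ?thesis using nN unfolding EPrep_def by auto
  qed
  obtain p where p1: "p \<ge> 1" and pinj: "\<forall>\<nu>\<in>V. \<forall>\<nu>'\<in>V. \<forall>q\<ge>1. (\<nu>^p)^q = (\<nu>'^p)^q \<longrightarrow> \<nu>^p = \<nu>'^p"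
    using choose_p[OF finV] by blast
  define B where "B = (\<lambda>\<nu>. \<nu>^p) ` V"
  have finB: "finite B" using finV unfolding B_def by simp
  have B0: "0 \<notin> B" using V0 unfolding B_def by auto
  define Q where "Q j l \<beta> = (\<Sum>\<nu>\<in>{\<nu>\<in>V. \<nu>^p = \<beta>}. smult (\<nu>^l) (P j \<nu> \<circ>\<^sub>p [:of_nat l, of_nat p:]))" for j l \<beta>
  have crep: "of_nat (a j (p*n+l)) = (\<Sum>\<beta>\<in>B. poly (Q j l \<beta>) (of_nat n) * \<beta> ^ n)"
    if jd: "j \<in> {1..d}" and nN: "n \<ge> N" for j l n
  proof -
    have "p * n + l \<ge> N" using nN p1 by (metis add_increasing2 le_trans mult_le_mono1 mult_1 zero_le)
    then show ?thesis using rep[OF jd] classrep_lemma[OF finV] unfolding B_def Q_def by simp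
  qed
  define S where "S j l = {\<beta>\<in>B. Q j l \<beta> \<noteq> 0}" for j l
  define \<rho> where "\<rho> j l = Max (norm ` S j l)" for j l
  define D where "D j l = Max ((\<lambda>\<beta>. degree (Q j l \<beta>)) ` {\<beta>\<in>S j l. norm \<beta> = \<rho> j l})" for j l
  define Sst where "Sst j l = {\<beta>\<in>S j l. norm \<beta> = \<rho> j l \<and> degree (Q j l \<beta>) = D j l}" for j l
  define Gs where "Gs j l n = (\<Sum>\<beta>\<in>Sst j l. lead_coeff (Q j l \<beta>) * (\<beta> / of_real (\<rho> j l)) ^ n)" for j l n
  have finS: "finite (S j l)" for j l using finB unfolding S_def by simp
  have SB: "S j l \<subseteq> B" for j l unfolding S_def by auto
  have Sne: "S j l \<noteq> {}" if jd: "j \<in> {1..d}" for j l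
  proof
    assume "S j l = {}"
    then have "\<forall>\<beta>\<in>B. Q j l \<beta> = 0" unfolding S_def by auto
    then have "(of_nat (a j (p*N+l)) :: complex) = 0" using crep[OF jd, of N l] by simp
    then show False using pos[OF jd, of "p*N+l"] by simp
  qed
  have rho_in: "\<rho> j l \<in> norm ` S j l" if jd: "j \<in> {1..d}" for j l
    unfolding \<rho>_def using finS Sne[OF jd] by (intro Max_in) auto
  have rho_pos: "\<rho> j l > 0" if jd: "j \<in> {1..d}" for j l
    using rho_in[OF jd, of l] SB[of j l] B0 by auto
  have Sst_ne: "Sst j l \<noteq> {}" if jd: "j \<in> {1..d}" for j l
  proof -
    have ne: "{\<beta>\<in>S j l. norm \<beta> = \<rho> j l} \<noteq> {}" using rho_in[OF jd, of l] by auto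
    have "D j l \<in> (\<lambda>\<beta>. degree (Q j l \<beta>)) ` {\<beta>\<in>S j l. norm \<beta> = \<rho> j l}"
      unfolding D_def using finS ne by (intro Max_in) auto
    then show ?thesis unfolding Sst_def by auto
  qed
  have SstS: "Sst j l \<subseteq> S j l" for j l unfolding Sst_def by auto
  have conv: "(\<lambda>n. of_real (real (a j (p*n+l))) / of_real (\<rho> j l ^ n * real n ^ D j l) - Gs j l n) \<longlonglongrightarrow> 0"
    if jd: "j \<in> {1..d}" for j l
  proof -
    have "(\<lambda>n. (\<Sum>\<beta>\<in>B. poly (Q j l \<beta>) (of_nat n) * \<beta> ^ n) / of_real (\<rho> j l ^ n * real n ^ D j l) - Gs j l n) \<longlonglongrightarrow> 0"
      unfolding Gs_def
      by (rule class_asymp[OF finB B0 S_def Sne[OF jd, of l] \<rho>_def D_def Sst_def])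
    moreover have "eventually (\<lambda>n. (\<Sum>\<beta>\<in>B. poly (Q j l \<beta>) (of_nat n) * \<beta> ^ n) / of_real (\<rho> j l ^ n * real n ^ D j l) - Gs j l n
        = of_real (real (a j (p*n+l))) / of_real (\<rho> j l ^ n * real n ^ D j l) - Gs j l n) sequentially"
      by (rule eventually_sequentiallyI[of N]) (simp add: crep[OF jd])
    ultimately show ?thesis by (rule Lim_transform_eventually)
  qed

  define u where "u \<beta> = \<beta> / of_real (norm \<beta>)" for \<beta> :: complex
  have un: "\<forall>\<beta>\<in>B. norm (u \<beta>) = 1" using B0 unfolding u_def by (auto simp: norm_divide)
  have uSst: "\<beta> / of_real (\<rho> j l) = u \<beta>" if "\<beta> \<in> Sst j l" for \<beta> j l
    using that unfolding Sst_def u_def by simp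
  have Qnz: "Q j l \<beta> \<noteq> 0" if "\<beta> \<in> Sst j l" for \<beta> j l using that unfolding Sst_def S_def by auto
  define I where "I = {1..d} \<times> {0..p}"
  have injSst: "inj_on (\<lambda>\<beta>. u \<beta> ^ q) (Sst j l)" if q: "q \<ge> 1" for j l q
  proof (rule inj_onI)
    fix \<beta> \<beta>' assume b: "\<beta> \<in> Sst j l" "\<beta>' \<in> Sst j l" and e: "u \<beta> ^ q = u \<beta>' ^ q"
    have nb: "norm \<beta> = \<rho> j l" "norm \<beta>' = \<rho> j l" using b unfolding Sst_def by auto
    have bB: "\<beta> \<in> B" "\<beta>' \<in> B" using b SstS SB by blast+
    have "\<beta> = of_real (\<rho> j l) * u \<beta>" "\<beta>' = of_real (\<rho> j l) * u \<beta>'"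
      using nb bB B0 unfolding u_def by (auto simp: field_simps)
    then have "\<beta> ^ q = \<beta>' ^ q" using e by (metis power_mult_distrib)
    moreover obtain \<nu> \<nu>' where "\<nu> \<in> V" "\<nu>' \<in> V" "\<beta> = \<nu>^p" "\<beta>' = \<nu>'^p" using bB unfolding B_def by auto
    ultimately show "\<beta> = \<beta>'" using pinj q by blast
  qed
  obtain m where m: "\<forall>i\<in>I. (\<Sum>\<beta>\<in>Sst (fst i) (snd i). lead_coeff (Q (fst i) (snd i) \<beta>) * u \<beta> ^ m) \<noteq> 0"
  proof -
    have "\<exists>m. \<forall>i\<in>I. (\<Sum>\<beta>\<in>Sst (fst i) (snd i). lead_coeff (Q (fst i) (snd i) \<beta>) * u \<beta> ^ m) \<noteq> 0"
    proof (rule common_m[OF finB un])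
      show "finite I" unfolding I_def by simp
      show "\<forall>i\<in>I. Sst (fst i) (snd i) \<subseteq> B \<and> Sst (fst i) (snd i) \<noteq> {}"
        using SstS SB Sst_ne unfolding I_def by fastforce
      show "\<forall>i\<in>I. \<forall>w\<in>Sst (fst i) (snd i). lead_coeff (Q (fst i) (snd i) w) \<noteq> 0"
        using Qnz by simp
      show "\<forall>i\<in>I. \<forall>q\<ge>1. inj_on (\<lambda>w. u w ^ q) (Sst (fst i) (snd i))"
        using injSst by blast
    qed
    then show ?thesis using that by blast
  qed
  obtain qs where qs: "strict_mono qs" and qlim: "\<forall>v\<in>u ` B. (\<lambda>k. v ^ qs k) \<longlonglongrightarrow> 1"
    using approx_seq[of "u ` B"] finB un by auto
  define nk where "nk k = m + qs k" for k
  have nk_mono: "strict_mono nk" using qs unfolding nk_def strict_mono_def by simp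
  have nk_lim: "filterlim nk at_top sequentially" using filterlim_subseq[OF nk_mono] by simp
  define G where "G j l = (\<Sum>\<beta>\<in>Sst j l. lead_coeff (Q j l \<beta>) * u \<beta> ^ m)" for j l
  have Glim: "(\<lambda>k. Gs j l (nk k)) \<longlonglongrightarrow> G j l" for j l
  proof -
    have "Gs j l (nk k) = (\<Sum>\<beta>\<in>Sst j l. lead_coeff (Q j l \<beta>) * u \<beta> ^ m * u \<beta> ^ qs k)" for k
      unfolding Gs_def nk_def by (rule sum.cong[OF refl]) (simp add: uSst power_add mult.assoc)
    moreover have "(\<lambda>k. \<Sum>\<beta>\<in>Sst j l. lead_coeff (Q j l \<beta>) * u \<beta> ^ m * u \<beta> ^ qs k)
        \<longlonglongrightarrow> (\<Sum>\<beta>\<in>Sst j l. lead_coeff (Q j l \<beta>) * u \<beta> ^ m * 1)"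
    proof (intro tendsto_sum tendsto_mult tendsto_const)
      fix \<beta> assume "\<beta> \<in> Sst j l"
      then have "u \<beta> \<in> u ` B" using SstS SB by blast
      then show "(\<lambda>k. u \<beta> ^ qs k) \<longlonglongrightarrow> 1" using qlim by blast
    qed
    ultimately show ?thesis unfolding G_def by simp
  qed
  have G0: "G j l \<noteq> 0" if "j \<in> {1..d}" "l \<in> {0..p}" for j l
    using m that unfolding G_def I_def by auto
  have key: "(\<lambda>k. real (a j (p * nk k + l)) / (\<rho> j l ^ nk k * real (nk k) ^ D j l)) \<longlonglongrightarrow> Re (G j l) \<and> Re (G j l) > 0"
    if jd: "j \<in> {1..d}" and lp: "l \<in> {0..p}" for j l
    using class_limit[OF conv[OF jd] nk_lim Glim G0[OF jd lp] _ rho_pos[OF jd]] by simp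
  have rho1: "\<rho> j l \<ge> 1" if jd: "j \<in> {1..d}" and lp: "l \<in> {0..p}" for j l
  proof (rule rho_ge1[OF _ rho_pos[OF jd] nk_lim])
    show "(\<lambda>k. real (a j (p * nk k + l)) / (\<rho> j l ^ nk k * real (nk k) ^ D j l)) \<longlonglongrightarrow> Re (G j l)"
      using key[OF jd lp] by blast
    show "\<And>n. 1 \<le> real (a j (p * n + l))" using pos[OF jd] by (simp add: Suc_le_eq)
  qed

  have Qp: "Q j p \<beta> = smult \<beta> (Q j 0 \<beta> \<circ>\<^sub>p [:1,1:])" for j \<beta>
    unfolding Q_def by (rule Qp_Q0)
  have Qp_nz: "(Q j p \<beta> \<noteq> 0) = (Q j 0 \<beta> \<noteq> 0)" if "\<beta> \<in> B" for j \<beta>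
  proof -
    have "\<beta> \<noteq> 0" using that B0 by auto
    then show ?thesis unfolding Qp by (simp add: pcompose_eq_0_iff)
  qed
  have Qp_deg: "degree (Q j p \<beta>) = degree (Q j 0 \<beta>)" if "\<beta> \<in> B" for j \<beta>
  proof -
    have "\<beta> \<noteq> 0" using that B0 by auto
    then show ?thesis unfolding Qp by (simp add: degree_pcompose)
  qed
  have Seq: "S j p = S j 0" for j unfolding S_def using Qp_nz by auto
  have rhoeq: "\<rho> j p = \<rho> j 0" for j unfolding \<rho>_def Seq ..
  have Deq: "D j p = D j 0" for j
    unfolding D_def rhoeq Seq using Qp_deg SB[of j 0] by (intro arg_cong[where f=Max] image_cong) auto
  have growth: "\<exists>l\<in>{0..p}. \<rho> j l > 1 \<or> D j l \<ge> 1" if jd: "j \<in> {1..d}" for j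
  proof (rule ccontr)
    assume H: "\<not> (\<exists>l\<in>{0..p}. \<rho> j l > 1 \<or> D j l \<ge> 1)"
    then have rl: "\<rho> j l = 1 \<and> D j l = 0" if "l \<in> {0..p}" for l
      using rho1[OF jd that] that by force
    have bnd: "\<exists>K. \<forall>n. real (a j (p*n+l)) \<le> K" if lp0: "l < p" for l
    proof -
      have lp: "l \<in> {0..p}" using lp0 by simp
      have "convergent (\<lambda>n. of_real (real (a j (p*n+l))) / of_real (\<rho> j l ^ n * real n ^ D j l) - Gs j l n)"
        using conv[OF jd] by (rule convergentI)
      then have "Bseq (\<lambda>n. of_real (real (a j (p*n+l))) / of_real (\<rho> j l ^ n * real n ^ D j l) - Gs j l n)"
        by (rule convergent_imp_Bseq)
      then obtain K0 where K0: "\<And>n. norm (of_real (real (a j (p*n+l))) / of_real (\<rho> j l ^ n * real n ^ D j l) - Gs j l n) \<le> K0"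
        unfolding Bseq_def by blast
      define M where "M = (\<Sum>\<beta>\<in>Sst j l. norm (lead_coeff (Q j l \<beta>)))"
      have Gb: "norm (Gs j l n) \<le> M" for n
      proof -
        have "norm (Gs j l n) \<le> (\<Sum>\<beta>\<in>Sst j l. norm (lead_coeff (Q j l \<beta>) * (\<beta> / of_real (\<rho> j l)) ^ n))"
          unfolding Gs_def by (rule norm_sum)
        also have "\<dots> = M" unfolding M_def
        proof (rule sum.cong[OF refl])
          fix \<beta> assume b: "\<beta> \<in> Sst j l"
          then have "\<beta> \<in> B" using SstS SB by blast
          then have "norm (u \<beta>) = 1" using un by blast
          then show "norm (lead_coeff (Q j l \<beta>) * (\<beta> / of_real (\<rho> j l)) ^ n) = norm (lead_coeff (Q j l \<beta>))"
            using uSst[OF b] by (simp add: norm_mult norm_power)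
        qed
        finally show ?thesis .
      qed
      have "real (a j (p*n+l)) \<le> K0 + M" for n
      proof -
        have "norm (of_real (real (a j (p*n+l))) - Gs j l n) \<le> K0" using K0[of n] rl[OF lp] by simp
        then have "norm (of_real (real (a j (p*n+l))) :: complex) \<le> K0 + M"
          using Gb[of n] norm_triangle_ineq2[of "of_real (real (a j (p*n+l))) :: complex" "Gs j l n"] by linarith
        then show ?thesis by simp
      qed
      then show ?thesis by blast
    qed
    have "\<forall>l. \<exists>K. l < p \<longrightarrow> (\<forall>n. real (a j (p*n+l)) \<le> K)" using bnd by blast
    then obtain Kf where Kf: "\<And>l n. l < p \<Longrightarrow> real (a j (p*n+l)) \<le> Kf l" by metis
    define Bd where "Bd = (\<Sum>l<p. max 0 (Kf l))"
    have abnd: "real (a j n) \<le> Bd" for n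
    proof -
      have nm: "n = p * (n div p) + n mod p" by simp
      have lt: "n mod p < p" using p1 by simp
      have "real (a j n) \<le> Kf (n mod p)" using Kf[OF lt, of "n div p"] nm by metis
      also have "\<dots> \<le> max 0 (Kf (n mod p))" by simp
      also have "\<dots> \<le> Bd" unfolding Bd_def using lt by (intro member_le_sum) auto
      finally show ?thesis .
    qed
    have "bdd_above (range (a j))"
    proof (rule bdd_aboveI2)
      fix n
      have "real (a j n) \<le> real_of_int \<lceil>Bd\<rceil>" using abnd[of n] le_of_int_ceiling order_trans by blast
      then have "int (a j n) \<le> \<lceil>Bd\<rceil>" by linarith
      then show "a j n \<le> nat \<lceil>Bd\<rceil>" by linarith
    qed
    then show False using unbdd[OF jd] by blast
  qed
  show ?thesis
  proof (intro exI[of _ p] exI[of _ \<rho>] exI[of _ D] exI[of _ nk] conjI)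
    show "p \<ge> 1" by (rule p1)
    show "strict_mono nk" by (rule nk_mono)
    show "\<forall>j\<in>{1..d}. \<forall>l\<in>{0..p}. \<rho> j l \<ge> 1" using rho1 by blast
    show "\<forall>j\<in>{1..d}. \<forall>l\<in>{0..p}. asymp_approx (\<lambda>k. real (a j (p * nk k + l))) (\<lambda>k. \<rho> j l ^ nk k * real (nk k) ^ D j l)"
      unfolding asymp_approx_def using key by blast
    show "\<forall>j\<in>{1..d}. \<exists>l\<in>{0..p}. \<rho> j l > 1 \<or> D j l \<ge> 1" using growth by blast
    show "\<forall>j\<in>{1..d}. \<rho> j 0 = \<rho> j p \<and> D j 0 = D j p" using rhoeq Deq by simp
  qed
qed

end
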